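(* Let $n\ge3$. Suppose $\mathcal{CB}$ is a set of $\binom{n-1}{2}$ three-cycle graphs in $\mathbb G^n_A$, each of weight $1$, such that each member of $\mathcal{CB}$ contains an arc (unordered pair of vertices) that belongs to no other member of $\mathcal{CB}$. Then $\mathcal{CB}$ is a basis of $\mathbb C^n_A$, the orthogonal complement of $\mathbb{ST}^n_A$ in $\mathbb G^n_A$.
   Context: $\mathbb G^n_A$ is the space of complete weighted directed graphs without loops on vertices $V_1,\dots,V_n$ where arc $V_i\to V_j$ has weight $d_{i,j}$ with $d_{j,i}=-d_{i,j}$, identified with $\mathbb R^{\binom n2}$ via the entries $d_{i,j}$, $i<j$, with the standard inner product. $\mathbb{ST}^n_A$ is the $(n-1)$-dimensional subspace of strongly transitive graphs, i.e. those with $d_{i,j}+d_{j,k}=d_{i,k}$ for all distinct $i,j,k$. A three-cycle of weight $x$ on distinct vertices $V_a,V_b,V_c$ is the graph with $d_{a,b}=d_{b,c}=d_{c,a}=x$ (hence $d_{b,a}=d_{c,b}=d_{a,c}=-x$) and all other weights zero. *)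

theory Defs
  imports Complex_Main "HOL-Library.Function_Algebras"
begin

text \<open>A graph in G^n_A (vertices 0..n-1) is represented by its upper-triangular weights:
  a function d on pairs (i,j) with i<j<n, zero elsewhere.\<close>

definition pairs :: "nat \<Rightarrow> (nat \<times> nat) set" where
  "pairs n = {(i, j). i < j \<and> j < n}"

definition GA :: "nat \<Rightarrow> (nat \<times> nat \<Rightarrow> real) set" where
  "GA n = {d. \<forall>p. p \<notin> pairs n \<longrightarrow> d p = 0}"

definition wt :: "(nat \<times> nat \<Rightarrow> real) \<Rightarrow> nat \<Rightarrow> nat \<Rightarrow> real" where
  "wt d i j = (if i < j then d (i, j) else if j < i then - d (j, i) else 0)"

definition ginner :: "nat \<Rightarrow> (nat \<times> nat \<Rightarrow> real) \<Rightarrow> (nat \<times> nat \<Rightarrow> real) \<Rightarrow> real" where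
  "ginner n d e = (\<Sum>p\<in>pairs n. d p * e p)"

definition STA :: "nat \<Rightarrow> (nat \<times> nat \<Rightarrow> real) set" where
  "STA n = {d \<in> GA n. \<forall>i j k. i < n \<and> j < n \<and> k < n \<and> i \<noteq> j \<and> j \<noteq> k \<and> i \<noteq> k
              \<longrightarrow> wt d i j + wt d j k = wt d i k}"

definition CA :: "nat \<Rightarrow> (nat \<times> nat \<Rightarrow> real) set" where
  "CA n = {d \<in> GA n. \<forall>e \<in> STA n. ginner n d e = 0}"

definition three_cycle :: "nat \<Rightarrow> nat \<Rightarrow> nat \<Rightarrow> real \<Rightarrow> (nat \<times> nat \<Rightarrow> real)" where
  "three_cycle a b c x = (\<lambda>(i, j). if i < j then
      (if (i, j) \<in> {(a, b), (b, c), (c, a)} then x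
       else if (j, i) \<in> {(a, b), (b, c), (c, a)} then - x else 0)
    else 0)"

definition is_three_cycle :: "nat \<Rightarrow> real \<Rightarrow> (nat \<times> nat \<Rightarrow> real) \<Rightarrow> bool" where
  "is_three_cycle n x d \<longleftrightarrow> (\<exists>a b c. a < n \<and> b < n \<and> c < n \<and> a \<noteq> b \<and> b \<noteq> c \<and> a \<noteq> c
       \<and> d = three_cycle a b c x)"

definition arcs :: "nat \<Rightarrow> (nat \<times> nat \<Rightarrow> real) \<Rightarrow> nat set set" where
  "arcs n d = {{i, j} | i j. (i, j) \<in> pairs n \<and> d (i, j) \<noteq> 0}"

definition gscale :: "real \<Rightarrow> (nat \<times> nat \<Rightarrow> real) \<Rightarrow> (nat \<times> nat \<Rightarrow> real)" where
  "gscale c d = (\<lambda>p. c * d p)"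

definition is_basis_of :: "(nat \<times> nat \<Rightarrow> real) set \<Rightarrow> (nat \<times> nat \<Rightarrow> real) set \<Rightarrow> bool" where
  "is_basis_of B V \<longleftrightarrow> B \<subseteq> V \<and> \<not> module.dependent gscale B \<and> module.span gscale B = V"

end

theory Submission
  imports Defs
begin

lemma gscale_module: "module gscale"
  by unfold_locales (auto simp: gscale_def fun_eq_iff algebra_simps)

interpretation M: module gscale by (rule gscale_module)
interpretation V: vector_space gscale
  using gscale_module by (simp add: module_iff_vector_space)

lemma sum_fun_apply: "(sum f A) x = (\<Sum>a\<in>A. f a x)" for f :: "'a \<Rightarrow> 'b \<Rightarrow> real"
  by (induction A rule: infinite_finite_induct) auto

lemma finite_pairs: "finite (pairs n)"
  by (rule finite_subset[of _ "{..<n} \<times> {..<n}"]) (auto simp: pairs_def)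

lemma card_pairs: "card (pairs m) = m choose 2"
proof (induction m)
  case 0 then show ?case by (simp add: pairs_def)
next
  case (Suc m)
  have e: "pairs (Suc m) = pairs m \<union> (\<lambda>i. (i, m)) ` {..<m}"
    by (auto simp: pairs_def less_Suc_eq)
  have d: "pairs m \<inter> (\<lambda>i. (i, m)) ` {..<m} = {}" by (auto simp: pairs_def)
  have "card (pairs (Suc m)) = card (pairs m) + card ((\<lambda>i. (i, m)) ` {..<m})"
    unfolding e by (rule card_Un_disjoint) (use d finite_pairs in auto)
  also have "card ((\<lambda>i. (i, m)) ` {..<m}) = m" by (subst card_image) (auto simp: inj_on_def)
  finally show ?case using Suc by (simp add: numeral_2_eq_2)
qed

definition P' :: "nat \<Rightarrow> (nat \<times> nat) set" where
  "P' n = {(i, j). 0 < i \<and> i < j \<and> j < n}"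

lemma card_P': assumes "n \<ge> 1" shows "card (P' n) = (n - 1) choose 2"
proof -
  have "P' n = (\<lambda>(i, j). (i + 1, j + 1)) ` pairs (n - 1)"
  proof
    show "P' n \<subseteq> (\<lambda>(i, j). (i + 1, j + 1)) ` pairs (n - 1)"
    proof
      fix p assume "p \<in> P' n"
      then obtain i j where p: "p = (i, j)" "0 < i" "i < j" "j < n" by (auto simp: P'_def)
      then have "(i - 1, j - 1) \<in> pairs (n - 1)" by (auto simp: pairs_def)
      moreover have "p = (\<lambda>(i, j). (i + 1, j + 1)) (i - 1, j - 1)" using p by auto
      ultimately show "p \<in> (\<lambda>(i, j). (i + 1, j + 1)) ` pairs (n - 1)" by blast
    qed
  qed (use assms in \<open>auto simp: P'_def pairs_def\<close>)
  moreover have "inj_on (\<lambda>(i, j). (i + 1, j + 1)) (pairs (n - 1))"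
    by (auto simp: inj_on_def)
  ultimately show ?thesis by (simp add: card_image card_pairs)
qed

lemma wt_antisym: "wt d j i = - wt d i j"
  by (auto simp: wt_def)

definition arc :: "nat \<Rightarrow> nat \<Rightarrow> (nat \<times> nat \<Rightarrow> real)" where
  "arc x y = (\<lambda>(i, j). if i < j then (if (i, j) = (x, y) then 1 else if (j, i) = (x, y) then -1 else 0) else 0)"

lemma tc_arcs:
  assumes "a \<noteq> b" "b \<noteq> c" "a \<noteq> c"
  shows "three_cycle a b c 1 = arc a b + arc b c + arc c a"
  using assms by (auto simp: fun_eq_iff three_cycle_def arc_def)

lemma ginner_add: "ginner n (d + d') e = ginner n d e + ginner n d' e"
  by (simp add: ginner_def sum.distrib algebra_simps)

lemma ginner_scale: "ginner n (gscale c d) e = c * ginner n d e"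
  by (simp add: ginner_def gscale_def sum_distrib_left algebra_simps)

lemma ginner_zero: "ginner n 0 e = 0"
  by (simp add: ginner_def)

lemma ginner_arc:
  assumes "x < n" "y < n" "x \<noteq> y"
  shows "ginner n (arc x y) e = wt e x y"
proof -
  have "ginner n (arc x y) e = (\<Sum>p\<in>pairs n. if p = (min x y, max x y) then wt e x y else 0)"
    unfolding ginner_def
  proof (rule sum.cong)
    fix p assume "p \<in> pairs n"
    then obtain i j where p: "p = (i, j)" "i < j" by (auto simp: pairs_def)
    show "arc x y p * e p = (if p = (min x y, max x y) then wt e x y else 0)"
      using p assms by (cases "x < y") (auto simp: arc_def wt_def min_def max_def)
  qed simp
  also have "\<dots> = wt e x y"
    by (subst sum.delta[OF finite_pairs]) (use assms in \<open>auto simp: pairs_def min_def max_def\<close>)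
  finally show ?thesis .
qed

lemma CA_subspace: "M.subspace (CA n)"
  unfolding M.subspace_def
proof (intro conjI ballI allI)
  show "0 \<in> CA n" by (simp add: CA_def GA_def ginner_zero)
next
  fix x y assume "x \<in> CA n" "y \<in> CA n"
  then show "x + y \<in> CA n" by (simp add: CA_def GA_def ginner_add)
next
  fix c x assume "x \<in> CA n"
  then have "x \<in> GA n" "\<forall>e\<in>STA n. ginner n x e = 0" by (auto simp: CA_def)
  moreover have "gscale c x \<in> GA n" using \<open>x \<in> GA n\<close> by (simp add: GA_def gscale_def)
  ultimately show "gscale c x \<in> CA n" by (simp add: CA_def ginner_scale del: gscale_def)
qed

lemma tc_in_CA:
  assumes "is_three_cycle n 1 d"
  shows "d \<in> CA n"
proof -
  obtain a b c where abc: "a < n" "b < n" "c < n" "a \<noteq> b" "b \<noteq> c" "a \<noteq> c"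
    and d: "d = three_cycle a b c 1"
    using assms by (auto simp: is_three_cycle_def)
  have "d \<in> GA n"
    using abc unfolding d GA_def pairs_def three_cycle_def by auto
  moreover have "ginner n d e = 0" if "e \<in> STA n" for e
  proof -
    have st: "wt e a b + wt e b c = wt e a c" using that abc by (auto simp: STA_def)
    have "ginner n d e = wt e a b + wt e b c + wt e c a"
      using abc by (simp add: d tc_arcs ginner_add ginner_arc)
    also have "\<dots> = 0" using st wt_antisym[of e a c] by simp
    finally show ?thesis .
  qed
  ultimately show ?thesis by (simp add: CA_def)
qed

definition R :: "(nat \<times> nat \<Rightarrow> real) \<Rightarrow> (nat \<times> nat \<Rightarrow> real)" where
  "R d = (\<lambda>(i, j). if i = 0 then 0 else d (i, j))"

lemma R_hom: "module_hom gscale gscale R"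
  unfolding module_hom_def module_hom_axioms_def
  using gscale_module by (auto simp: R_def gscale_def fun_eq_iff)

interpretation RH: module_hom gscale gscale R by (rule R_hom)

definition ek :: "nat \<Rightarrow> nat \<Rightarrow> (nat \<times> nat \<Rightarrow> real)" where
  "ek n k = (\<lambda>(i, j). if (i, j) \<in> pairs n then (if j = k then 1 else 0) - (if i = k then 1 else 0) else 0)"

lemma wt_ek: "i < n \<Longrightarrow> j < n \<Longrightarrow> wt (ek n k) i j = (if j = k then 1 else 0) - (if i = k then 1 else 0)"
  by (auto simp: wt_def ek_def pairs_def)

lemma ek_STA: "ek n k \<in> STA n"
  unfolding STA_def
proof (intro CollectI conjI allI impI)
  show "ek n k \<in> GA n" by (auto simp: GA_def ek_def)
next
  fix i j l assume "i < n \<and> j < n \<and> l < n \<and> i \<noteq> j \<and> j \<noteq> l \<and> i \<noteq> l"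
  then show "wt (ek n k) i j + wt (ek n k) j l = wt (ek n k) i l" by (simp add: wt_ek)
qed

lemma R_kernel:
  assumes "d \<in> CA n" "R d = 0"
  shows "d = 0"
proof (rule ext)
  fix p :: "nat \<times> nat"
  obtain i j where p: "p = (i, j)" by force
  have GA: "d \<in> GA n" and orth: "\<forall>e\<in>STA n. ginner n d e = 0" using assms(1) by (auto simp: CA_def)
  have Rz: "d (a, b) = 0" if "a \<noteq> 0" for a b
    using fun_cong[OF assms(2), of "(a, b)"] that by (simp add: R_def)
  show "d p = 0 p"
  proof (cases "p \<in> pairs n")
    case False then show ?thesis using GA p by (simp add: GA_def)
  next
    case True
    show ?thesis
    proof (cases "i = 0")
      case False then show ?thesis using Rz p by simp
    next
      case i0: True
      with True p have j: "0 < j" "j < n" by (auto simp: pairs_def)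
      have "ginner n d (ek n j) = (\<Sum>q\<in>pairs n. if q = (0, j) then d (0, j) else 0)"
        unfolding ginner_def
      proof (rule sum.cong)
        fix q assume "q \<in> pairs n"
        then obtain a b where q: "q = (a, b)" "a < b" "b < n" by (auto simp: pairs_def)
        show "d q * ek n j q = (if q = (0, j) then d (0, j) else 0)"
          using q j Rz[of a b] by (cases "a = 0") (auto simp: ek_def pairs_def)
      qed simp
      also have "\<dots> = d (0, j)"
        by (subst sum.delta[OF finite_pairs]) (use j in \<open>auto simp: pairs_def\<close>)
      finally have "d (0, j) = 0" using orth ek_STA[of n j] by simp
      then show ?thesis using p i0 by simp
    qed
  qed
qed

lemma R_inj_CA: "inj_on R (CA n)"
proof (rule inj_onI)
  fix x y assume xy: "x \<in> CA n" "y \<in> CA n" "R x = R y"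
  have "x - y \<in> CA n" using M.subspace_diff[OF CA_subspace xy(1,2)] .
  moreover have "R (x - y) = 0" using xy(3) by (simp add: RH.diff)
  ultimately have "x - y = 0" by (rule R_kernel)
  then show "x = y" by simp
qed

definition delta :: "nat \<times> nat \<Rightarrow> (nat \<times> nat \<Rightarrow> real)" where
  "delta p = (\<lambda>q. if q = p then 1 else 0)"

lemma finite_P': "finite (P' n)"
  by (rule finite_subset[OF _ finite_pairs[of n]]) (auto simp: P'_def pairs_def)

lemma R_in_span:
  assumes "s \<in> GA n"
  shows "R s \<in> M.span (delta ` P' n)"
proof -
  have "R s = (\<Sum>p\<in>P' n. gscale (s p) (delta p))"
  proof (rule ext)
    fix q
    have "(\<Sum>p\<in>P' n. gscale (s p) (delta p)) q = (\<Sum>p\<in>P' n. s p * (if q = p then 1 else 0))"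
      by (simp add: sum_fun_apply gscale_def delta_def)
    also have "\<dots> = (\<Sum>p\<in>P' n. if q = p then s q else 0)" by (rule sum.cong) auto
    also have "\<dots> = (if q \<in> P' n then s q else 0)" by (simp add: finite_P')
    also have "\<dots> = R s q"
      using assms by (cases q) (auto simp: R_def P'_def GA_def pairs_def)
    finally show "R s q = (\<Sum>p\<in>P' n. gscale (s p) (delta p)) q" by simp
  qed
  also have "\<dots> \<in> M.span (delta ` P' n)"
    by (intro M.span_sum M.span_scale M.span_base) auto
  finally show ?thesis .
qed

theorem corollary2:
  fixes n :: nat and CB :: "(nat \<times> nat \<Rightarrow> real) set"
  assumes "n \<ge> 3"
    and "finite CB" and "card CB = (n - 1) choose 2"
    and "\<forall>d \<in> CB. is_three_cycle n 1 d"
    and "\<forall>d \<in> CB. \<exists>e \<in> arcs n d. \<forall>d' \<in> CB. d' \<noteq> d \<longrightarrow> e \<notin> arcs n d'"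
  shows "is_basis_of CB (CA n)"
proof -
  have sub: "CB \<subseteq> CA n" using assms(4) tc_in_CA by blast
  have indep: "\<not> M.dependent CB"
  proof
    assume "M.dependent CB"
    then obtain u v where v: "v \<in> CB" "u v \<noteq> 0" and s: "(\<Sum>w\<in>CB. gscale (u w) w) = 0"
      using M.dependent_finite[OF assms(2)] by blast
    obtain e where e: "e \<in> arcs n v" "\<forall>d' \<in> CB. d' \<noteq> v \<longrightarrow> e \<notin> arcs n d'"
      using assms(5) v(1) by blast
    then obtain i j where ij: "e = {i, j}" "(i, j) \<in> pairs n" "v (i, j) \<noteq> 0"
      by (auto simp: arcs_def)
    have oth: "w (i, j) = 0" if "w \<in> CB" "w \<noteq> v" for w
    proof (rule ccontr)
      assume "w (i, j) \<noteq> 0"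
      then have "e \<in> arcs n w" using ij by (auto simp: arcs_def)
      then show False using e that by blast
    qed
    have "0 = (\<Sum>w\<in>CB. gscale (u w) w) (i, j)" using s by simp
    also have "\<dots> = (\<Sum>w\<in>CB. u w * w (i, j))" by (simp add: sum_fun_apply gscale_def)
    also have "\<dots> = u v * v (i, j) + (\<Sum>w\<in>CB - {v}. u w * w (i, j))"
      by (rule sum.remove[OF assms(2) v(1)])
    also have "(\<Sum>w\<in>CB - {v}. u w * w (i, j)) = 0"
      by (rule sum.neutral) (use oth in auto)
    finally have "u v * v (i, j) = 0" by simp
    then show False using v(2) ij(3) by simp
  qed
  have span1: "M.span CB \<subseteq> CA n" by (rule M.span_minimal[OF sub CA_subspace])
  have span2: "CA n \<subseteq> M.span CB"
  proof
    fix d assume d: "d \<in> CA n"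
    show "d \<in> M.span CB"
    proof (rule ccontr)
      assume nd: "d \<notin> M.span CB"
      define S where "S = insert d CB"
      have dCB: "d \<notin> CB" using nd M.span_superset by blast
      have cardS: "card S = ((n - 1) choose 2) + 1"
        using dCB assms(2,3) by (simp add: S_def)
      have indS: "\<not> M.dependent S" unfolding S_def
        by (rule V.independent_insertI[OF nd indep])
      have SCA: "S \<subseteq> CA n" using sub d by (simp add: S_def)
      have spS: "M.span S \<subseteq> CA n" by (rule M.span_minimal[OF SCA CA_subspace])
      have injS: "inj_on R (M.span S)" by (rule inj_on_subset[OF R_inj_CA spS])
      have indRS: "\<not> M.dependent (R ` S)"
        by (rule RH.independent_injective_image[OF indS injS])
      have cardRS: "card (R ` S) = card S"
        by (rule card_image[OF inj_on_subset[OF injS M.span_superset]])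
      have RSsp: "R ` S \<subseteq> M.span (delta ` P' n)"
        using SCA R_in_span by (auto simp: CA_def)
      have "card (R ` S) \<le> card (delta ` P' n)"
        using V.independent_span_bound[OF _ indRS RSsp] finite_P' by blast
      also have "\<dots> \<le> card (P' n)" by (rule card_image_le[OF finite_P'])
      also have "\<dots> = (n - 1) choose 2" using assms(1) by (simp add: card_P')
      finally show False using cardRS cardS by simp
    qed
  qed
  show ?thesis unfolding is_basis_of_def
    using sub indep span1 span2 by blast
qed

end
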